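(* At any point during the execution of the Part I procedure, let $uv\in E$ be an edge such that $u$ is even and $v$ is odd. Then $\mathrm{lcp}_{\mathrm{odd}}(v)\le \mathrm{lcp}(u)+1$.
   Context: Let $G=(V,E)$ be a finite undirected graph and $M$ a matching in $G$; free vertices and $\mathit{mate}(v)$ are as usual. The Part I procedure maintains a search structure $S$: a forest whose nodes are either single (odd) vertices or blossoms (disjoint vertex sets with a distinguished base vertex), each tree rooted at a blossom containing a free vertex. Vertices in $S$ are labelled even (those in blossoms) or odd; vertices not in $S$ are unlabelled. A vertex is born even/odd according to the label it receives when inserted. The procedure maintains $\mathrm{lcp}(v)$ for even vertices and $\mathrm{lcp}_{\mathrm{odd}}(v)$ for vertices born odd. The blossom nodes currently in $S$ are the maximal blossoms. Phase $0$: every free vertex $v$ becomes the root of its own tree as a trivial blossom $\{v\}$ with base $v$, even, $\mathrm{lcp}(v)=0$. For $\Delta=1,2,\dots$, phase $\Delta$ does: (i) if $\Delta$ is even, growth steps: while some even vertex $v$ with $\mathrm{lcp}(v)=\Delta-2$ has a neighbour $x$ not in $S$, add $x$ as an odd child of the blossom containing $v$ with $\mathrm{lcp}_{\mathrm{odd}}(x)=\Delta-1$, and $\mathit{mate}(x)$ as a child of $x$, as a trivial even blossom with $\mathrm{lcp}(\mathit{mate}(x))=\Delta$; (ii) bridge steps: while there is a non-matching edge $xy$ with $x,y$ even, in different maximal blossoms $B_x,B_y$, and $\mathrm{lcp}(x)+\mathrm{lcp}(y)=2\Delta-2$: if $B_x,B_y$ lie in different trees the procedure stops; otherwise let $B$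 be the lowest common ancestor of $B_x,B_y$; every odd vertex $z$ on the tree paths from $B_x$ and $B_y$ to $B$ becomes even with $\mathrm{lcp}(z)=\mathrm{lcp}(x)+1+\mathrm{lcp}(y)-\mathrm{lcp}_{\mathrm{odd}}(z)$, and $B$ together with all blossoms and odd vertices on both paths is merged into one new blossom with base equal to the base of $B$, replacing $B$ in the tree. *)

theory Defs
  imports Main
begin

definition graph :: "'a set \<Rightarrow> 'a set set \<Rightarrow> bool" where
  "graph V E \<longleftrightarrow> finite V \<and> (\<forall>e\<in>E. \<exists>x y. e = {x, y} \<and> x \<noteq> y \<and> x \<in> V \<and> y \<in> V)"

definition matching :: "'a set set \<Rightarrow> 'a set set \<Rightarrow> bool" where
  "matching E M \<longleftrightarrow> M \<subseteq> E \<and> (\<forall>e\<in>M. \<forall>e'\<in>M. e \<noteq> e' \<longrightarrow> e \<inter> e' = {})"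

definition free :: "'a set \<Rightarrow> 'a set set \<Rightarrow> 'a \<Rightarrow> bool" where
  "free V M v \<longleftrightarrow> v \<in> V \<and> (\<forall>e\<in>M. v \<notin> e)"

definition mate :: "'a set set \<Rightarrow> 'a \<Rightarrow> 'a" where
  "mate M x = (THE y. {x, y} \<in> M)"

text \<open>Nodes of the search forest: single odd vertices, or blossoms (vertex set, base).\<close>
datatype 'a node = OddN 'a | Blos "'a set" 'a

fun verts :: "'a node \<Rightarrow> 'a set" where
  "verts (OddN v) = {v}"
| "verts (Blos S b) = S"

fun nbase :: "'a node \<Rightarrow> 'a" where
  "nbase (OddN v) = v"
| "nbase (Blos S b) = b"

fun is_blossom :: "'a node \<Rightarrow> bool" where
  "is_blossom (OddN v) = False"
| "is_blossom (Blos S b) = True"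

datatype stage = Growth | Bridge | Stopped

text \<open>State of the procedure: the nodes of S (the maximal blossoms and the odd vertices),
  the parent pointers of the forest, lcp, lcp_odd, the current phase Delta and the
  current stage within the phase.\<close>
record 'a sstate =
  nodes :: "'a node set"
  par :: "'a node \<Rightarrow> 'a node option"
  lcp :: "'a \<Rightarrow> int"
  lcpo :: "'a \<Rightarrow> int"
  dlt :: nat
  stg :: stage

definition inS :: "'a sstate \<Rightarrow> 'a \<Rightarrow> bool" where
  "inS st v \<longleftrightarrow> v \<in> \<Union> (verts ` nodes st)"

definition is_even :: "'a sstate \<Rightarrow> 'a \<Rightarrow> bool" where
  "is_even st v \<longleftrightarrow> (\<exists>S b. Blos S b \<in> nodes st \<and> v \<in> S)"

definition is_odd :: "'a sstate \<Rightarrow> 'a \<Rightarrow> bool" where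
  "is_odd st v \<longleftrightarrow> OddN v \<in> nodes st"

definition parrel :: "'a sstate \<Rightarrow> ('a node \<times> 'a node) set" where
  "parrel st = {(N, P). N \<in> nodes st \<and> par st N = Some P}"

definition anc :: "'a sstate \<Rightarrow> 'a node \<Rightarrow> 'a node set" where
  "anc st N = {P. (N, P) \<in> (parrel st)\<^sup>*}"

definition sanc :: "'a sstate \<Rightarrow> 'a node \<Rightarrow> 'a node set" where
  "sanc st N = {P. (N, P) \<in> (parrel st)\<^sup>+}"

text \<open>State after phase 0; the procedure then starts phase Delta = 1.\<close>
definition init :: "'a set \<Rightarrow> 'a set set \<Rightarrow> 'a sstate" where
  "init V M = \<lparr> nodes = {Blos {v} v | v. free V M v}, par = (\<lambda>_. None),
                lcp = (\<lambda>_. 0), lcpo = (\<lambda>_. 0), dlt = 1, stg = Growth \<rparr>"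

definition growth_possible :: "'a set set \<Rightarrow> 'a sstate \<Rightarrow> bool" where
  "growth_possible E st \<longleftrightarrow>
     (\<exists>v x. is_even st v \<and> lcp st v = int (dlt st) - 2 \<and> {v, x} \<in> E \<and> \<not> inS st x)"

definition bridge_edge :: "'a set set \<Rightarrow> 'a set set \<Rightarrow> 'a sstate \<Rightarrow> 'a \<Rightarrow> 'a \<Rightarrow> 'a node \<Rightarrow> 'a node \<Rightarrow> bool" where
  "bridge_edge E M st x y Bx By \<longleftrightarrow>
     stg st = Bridge \<and> {x, y} \<in> E \<and> {x, y} \<notin> M \<and>
     Bx \<in> nodes st \<and> By \<in> nodes st \<and> is_blossom Bx \<and> is_blossom By \<and>
     x \<in> verts Bx \<and> y \<in> verts By \<and> Bx \<noteq> By \<and>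
     lcp st x + lcp st y = 2 * int (dlt st) - 2"

text \<open>Blossom formation: B is the lowest common ancestor of Bx and By; P is the set of
  nodes on the two tree paths from Bx and By to B (including B).\<close>
definition merge_state :: "'a sstate \<Rightarrow> 'a \<Rightarrow> 'a \<Rightarrow> 'a node \<Rightarrow> 'a node \<Rightarrow> 'a node \<Rightarrow> 'a sstate" where
  "merge_state st x y Bx By B =
    (let P = (anc st Bx \<union> anc st By) - sanc st B;
         Nw = Blos (\<Union> (verts ` P)) (nbase B)
     in st\<lparr> nodes := (nodes st - P) \<union> {Nw},
            par := (\<lambda>N. if N = Nw then par st B
                         else (case par st N of None \<Rightarrow> None
                                | Some Q \<Rightarrow> if Q \<in> P then Some Nw else Some Q)),
            lcp := (\<lambda>z. if OddN z \<in> P then lcp st x + 1 + lcp st y - lcpo st z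
                        else lcp st z) \<rparr>)"

inductive step :: "'a set set \<Rightarrow> 'a set set \<Rightarrow> 'a sstate \<Rightarrow> 'a sstate \<Rightarrow> bool"
  for E M where
  grow: "\<lbrakk> stg st = Growth; even (dlt st); Blos S b \<in> nodes st; v \<in> S;
           lcp st v = int (dlt st) - 2; {v, x} \<in> E; \<not> inS st x; y = mate M x \<rbrakk>
         \<Longrightarrow> step E M st (st\<lparr> nodes := nodes st \<union> {OddN x, Blos {y} y},
                par := (par st)(OddN x := Some (Blos S b), Blos {y} y := Some (OddN x)),
                lcpo := (lcpo st)(x := int (dlt st) - 1),
                lcp := (lcp st)(y := int (dlt st)) \<rparr>)"
| to_bridge: "\<lbrakk> stg st = Growth; \<not> (even (dlt st) \<and> growth_possible E st) \<rbrakk>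
         \<Longrightarrow> step E M st (st\<lparr> stg := Bridge \<rparr>)"
| stop: "\<lbrakk> bridge_edge E M st x y Bx By; anc st Bx \<inter> anc st By = {} \<rbrakk>
         \<Longrightarrow> step E M st (st\<lparr> stg := Stopped \<rparr>)"
| merge: "\<lbrakk> bridge_edge E M st x y Bx By; B \<in> anc st Bx \<inter> anc st By;
            \<forall>C \<in> anc st Bx \<inter> anc st By. C \<in> anc st B \<rbrakk>
         \<Longrightarrow> step E M st (merge_state st x y Bx By B)"
| next_phase: "\<lbrakk> stg st = Bridge; \<not> (\<exists>x y Bx By. bridge_edge E M st x y Bx By) \<rbrakk>
         \<Longrightarrow> step E M st (st\<lparr> dlt := dlt st + 1, stg := Growth \<rparr>)"

end

theory Submission
  imports Defs
begin

definition donev :: "'a set set \<Rightarrow> 'a sstate \<Rightarrow> 'a \<Rightarrow> bool" where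
  "donev E st u \<longleftrightarrow> (\<forall>w. {u, w} \<in> E \<longrightarrow> inS st w)"

definition invar :: "'a set \<Rightarrow> 'a set set \<Rightarrow> 'a set set \<Rightarrow> 'a sstate \<Rightarrow> bool" where
  "invar V E M st \<longleftrightarrow>
   (\<forall>N\<in>nodes st. \<forall>Q. par st N = Some Q \<longrightarrow> Q \<in> nodes st) \<and>
   (\<forall>u. \<not> (is_even st u \<and> is_odd st u)) \<and>
   (\<forall>e\<in>M. \<forall>a\<in>e. \<forall>b\<in>e. inS st a \<longrightarrow> inS st b) \<and>
   (\<forall>z. free V M z \<longrightarrow> inS st z) \<and>
   (\<forall>w. is_odd st w \<longrightarrow> lcpo st w \<le> int (dlt st) - 1 \<and> odd (lcpo st w)) \<and>
   (\<forall>u. is_even st u \<longrightarrow> even (lcp st u)) \<and>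
   (\<forall>u. is_even st u \<longrightarrow> lcp st u + 2 < int (dlt st) \<longrightarrow> donev E st u) \<and>
   (\<forall>u. is_even st u \<longrightarrow> stg st \<noteq> Growth \<longrightarrow> even (dlt st) \<longrightarrow>
        lcp st u + 2 = int (dlt st) \<longrightarrow> donev E st u) \<and>
   (\<forall>u w. {u, w} \<in> E \<longrightarrow> is_even st u \<longrightarrow> is_odd st w \<longrightarrow> lcpo st w \<le> lcp st u + 1)"

lemma even_inS: "is_even st u \<Longrightarrow> inS st u"
  unfolding is_even_def inS_def by force

lemma odd_inS: "is_odd st u \<Longrightarrow> inS st u"
  unfolding is_odd_def inS_def by force

lemma invar_init: "invar V E M (init V M)"
proof -
  have ev: "is_even (init V M) u \<longleftrightarrow> free V M u" for u
    unfolding is_even_def init_def by auto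
  have od: "\<not> is_odd (init V M) u" for u
    unfolding is_odd_def init_def by auto
  have ins: "inS (init V M) u \<longleftrightarrow> free V M u" for u
    unfolding inS_def init_def by auto
  show ?thesis unfolding invar_def
    using ev od ins by (auto simp: init_def free_def)
qed

lemma invarD:
  assumes "invar V E M st"
  shows "\<forall>N\<in>nodes st. \<forall>Q. par st N = Some Q \<longrightarrow> Q \<in> nodes st"
   "\<And>u. \<not> (is_even st u \<and> is_odd st u)"
   "\<forall>e\<in>M. \<forall>a\<in>e. \<forall>b\<in>e. inS st a \<longrightarrow> inS st b"
   "\<And>z. free V M z \<Longrightarrow> inS st z"
   "\<And>w. is_odd st w \<Longrightarrow> lcpo st w \<le> int (dlt st) - 1"
   "\<And>w. is_odd st w \<Longrightarrow> odd (lcpo st w)"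
   "\<And>u. is_even st u \<Longrightarrow> even (lcp st u)"
   "\<And>u. is_even st u \<Longrightarrow> lcp st u + 2 < int (dlt st) \<Longrightarrow> donev E st u"
   "\<And>u. is_even st u \<Longrightarrow> stg st \<noteq> Growth \<Longrightarrow> even (dlt st) \<Longrightarrow>
        lcp st u + 2 = int (dlt st) \<Longrightarrow> donev E st u"
   "\<And>u w. {u, w} \<in> E \<Longrightarrow> is_even st u \<Longrightarrow> is_odd st w \<Longrightarrow> lcpo st w \<le> lcp st u + 1"
  using assms unfolding invar_def by blast+

lemma invar_grow:
  assumes inv: "invar V E M st" and G: "graph V E" and Mt: "matching E M"
    and "stg st = Growth" "even (dlt st)" "Blos S b \<in> nodes st" "v \<in> S"
    "lcp st v = int (dlt st) - 2" "{v, x} \<in> E" "\<not> inS st x" "y = mate M x"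
  shows "invar V E M (st\<lparr> nodes := nodes st \<union> {OddN x, Blos {y} y},
                par := (par st)(OddN x := Some (Blos S b), Blos {y} y := Some (OddN x)),
                lcpo := (lcpo st)(x := int (dlt st) - 1),
                lcp := (lcp st)(y := int (dlt st)) \<rparr>)" (is "invar V E M ?st")
proof -
  have gE: "\<forall>e\<in>E. \<exists>a c. e = {a, c} \<and> a \<noteq> c \<and> a \<in> V \<and> c \<in> V"
    using G unfolding graph_def by blast
  obtain a0 c0 where vx: "{v, x} = {a0, c0}" "c0 \<in> V" "a0 \<in> V"
    using gE assms(9) by blast
  have xV: "x \<in> V" using vx by (metis doubleton_eq_iff)
  have "\<not> free V M x" using invarD(4)[OF inv] assms(10) by blast
  then obtain e where eM: "e \<in> M" and xe: "x \<in> e" using xV unfolding free_def by blast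
  have "e \<in> E" using eM Mt unfolding matching_def by blast
  then obtain a c where ac: "e = {a, c}" "a \<noteq> c" using gE by blast
  obtain y' where e: "e = {x, y'}" and xy': "x \<noteq> y'"
  proof (cases "x = a")
    case True then show ?thesis using that[of c] ac by simp
  next
    case False then have "x = c" using xe ac by blast
    then show ?thesis using that[of a] ac by (simp add: insert_commute)
  qed
  have mate: "mate M x = y'" unfolding mate_def
  proof (rule the_equality)
    show "{x, y'} \<in> M" using eM e by simp
  next
    fix z assume z: "{x, z} \<in> M"
    have disj: "\<forall>e\<in>M. \<forall>e'\<in>M. e \<noteq> e' \<longrightarrow> e \<inter> e' = {}"
      using Mt unfolding matching_def by blast
    have "{x, z} = {x, y'}"
    proof (rule ccontr)
      assume ne: "{x, z} \<noteq> {x, y'}"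
      have "{x, y'} \<in> M" using eM e by simp
      then have "{x, z} \<inter> {x, y'} = {}" using disj z ne by (meson bspec)
      then show False by simp
    qed
    moreover have "z \<noteq> x"
    proof
      assume "z = x"
      then have "{x} = {x, y'}" using \<open>{x, z} = {x, y'}\<close> by simp
      then show False using xy' by (simp add: doubleton_eq_iff)
    qed
    ultimately show "z = y'" by (simp add: doubleton_eq_iff)
  qed
  have yy: "y = y'" using mate assms(11) by simp
  have yS: "\<not> inS st y"
  proof
    assume "inS st y"
    moreover have "y \<in> e" "x \<in> e" using e yy by simp_all
    ultimately have "inS st x" using invarD(3)[OF inv, rule_format, of e y x] eM by blast
    then show False using assms(10) by simp
  qed
  have xy: "x \<noteq> y" using xy' yy by simp
  have ev: "is_even ?st u \<longleftrightarrow> is_even st u \<or> u = y" for u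
    unfolding is_even_def by auto
  have od: "is_odd ?st u \<longleftrightarrow> is_odd st u \<or> u = x" for u
    unfolding is_odd_def by auto
  have ins: "inS ?st u \<longleftrightarrow> inS st u \<or> u = x \<or> u = y" for u
    unfolding inS_def by auto
  have dn: "donev E st u \<Longrightarrow> donev E ?st u" for u
    unfolding donev_def using ins by blast
  have exS: "\<not> is_even st x" "\<not> is_odd st x" "\<not> is_even st y" "\<not> is_odd st y"
    using yS assms(10) even_inS[of st] odd_inS[of st] by metis+
  have I1: "\<forall>N\<in>nodes ?st. \<forall>Q. par ?st N = Some Q \<longrightarrow> Q \<in> nodes ?st"
  proof (intro ballI allI impI)
    fix N Q assume N: "N \<in> nodes ?st" and Q: "par ?st N = Some Q"
    show "Q \<in> nodes ?st"
    proof (cases "N = OddN x \<or> N = Blos {y} y")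
      case True then show ?thesis using Q assms(6) by auto
    next
      case False then have "N \<in> nodes st" "par st N = Some Q" using N Q by auto
      then show ?thesis using invarD(1)[OF inv] by auto
    qed
  qed
  have I2: "\<forall>u. \<not> (is_even ?st u \<and> is_odd ?st u)"
    using invarD(2)[OF inv] xy exS unfolding ev od by blast
  have I3: "\<forall>e\<in>M. \<forall>a\<in>e. \<forall>b\<in>e. inS ?st a \<longrightarrow> inS ?st b"
  proof (intro ballI impI)
    fix e' a c assume e': "e' \<in> M" "a \<in> e'" "c \<in> e'" "inS ?st a"
    show "inS ?st c"
    proof (cases "e' = e")
      case True then show ?thesis using e' e yy ins by auto
    next
      case False
      then have "e' \<inter> e = {}" using Mt e' eM unfolding matching_def by blast
      then have "a \<noteq> x" "a \<noteq> y" using e' e yy by auto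
      then have "inS st a" using ins e' by blast
      then show ?thesis using invarD(3)[OF inv] e' ins by blast
    qed
  qed
  have I4: "\<forall>z. free V M z \<longrightarrow> inS ?st z" using invarD(4)[OF inv] ins by blast
  have I5: "\<forall>w. is_odd ?st w \<longrightarrow> lcpo ?st w \<le> int (dlt ?st) - 1 \<and> odd (lcpo ?st w)"
  proof (intro allI impI)
    fix w assume "is_odd ?st w"
    then consider "w = x" | "is_odd st w" "w \<noteq> x" using od by blast
    then show "lcpo ?st w \<le> int (dlt ?st) - 1 \<and> odd (lcpo ?st w)"
    proof cases
      case 1 then show ?thesis using assms(5) by simp
    next
      case 2 then show ?thesis using invarD(5,6)[OF inv] by simp
    qed
  qed
  have I6: "\<forall>u. is_even ?st u \<longrightarrow> even (lcp ?st u)"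
    using invarD(7)[OF inv] assms(5) exS unfolding ev by auto
  have I7: "\<forall>u. is_even ?st u \<longrightarrow> lcp ?st u + 2 < int (dlt ?st) \<longrightarrow> donev E ?st u"
  proof (intro allI impI)
    fix u assume "is_even ?st u" "lcp ?st u + 2 < int (dlt ?st)"
    then show "donev E ?st u" using invarD(8)[OF inv] dn exS unfolding ev
      by (cases "u = y") auto
  qed
  have I8: "\<forall>u. is_even ?st u \<longrightarrow> stg ?st \<noteq> Growth \<longrightarrow> even (dlt ?st) \<longrightarrow>
        lcp ?st u + 2 = int (dlt ?st) \<longrightarrow> donev E ?st u"
    using assms(4) by simp
  have I9: "\<forall>u w. {u, w} \<in> E \<longrightarrow> is_even ?st u \<longrightarrow> is_odd ?st w \<longrightarrow> lcpo ?st w \<le> lcp ?st u + 1"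
  proof (intro allI impI)
    fix u w assume uw: "{u, w} \<in> E" "is_even ?st u" "is_odd ?st w"
    show "lcpo ?st w \<le> lcp ?st u + 1"
    proof (cases "u = y")
      case True
      have "w = x \<or> (is_odd st w \<and> w \<noteq> x)" using uw od by blast
      then show ?thesis
      proof
        assume "w = x" then show ?thesis using True xy by simp
      next
        assume w: "is_odd st w \<and> w \<noteq> x"
        then have "lcpo st w \<le> int (dlt st) - 1" using invarD(5)[OF inv] by blast
        then show ?thesis using True w xy by simp
      qed
    next
      case False
      then have ue: "is_even st u" using uw ev by blast
      show ?thesis
      proof (cases "w = x")
        case True
        have "\<not> donev E st u" using uw True assms(10) unfolding donev_def by blast
        then have "\<not> lcp st u + 2 < int (dlt st)" using invarD(8)[OF inv ue] by blast
        then show ?thesis using True False xy by simp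
      next
        case False2: False
        then have "is_odd st w" using uw od by blast
        then show ?thesis using invarD(10)[OF inv _ ue] uw False False2 by auto
      qed
    qed
  qed
  show ?thesis unfolding invar_def by (intro conjI I1 I2 I3 I4 I5 I6 I7 I8 I9)
qed


lemma anc_nodes:
  assumes cl: "\<forall>N\<in>nodes st. \<forall>Q. par st N = Some Q \<longrightarrow> Q \<in> nodes st"
    and N: "N \<in> nodes st"
  shows "anc st N \<subseteq> nodes st"
proof
  fix P assume "P \<in> anc st N"
  then have "(N, P) \<in> (parrel st)\<^sup>*" unfolding anc_def by simp
  then show "P \<in> nodes st"
  proof (induction rule: rtrancl_induct)
    case base then show ?case using N .
  next
    case (step Q R) then show ?case using cl unfolding parrel_def by auto
  qed
qed

lemma invar_merge:
  assumes inv: "invar V E M st"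
    and be: "bridge_edge E M st x y Bx By" and B: "B \<in> anc st Bx \<inter> anc st By"
  shows "invar V E M (merge_state st x y Bx By B)" (is "invar V E M ?st")
proof -
  define P where "P = (anc st Bx \<union> anc st By) - sanc st B"
  define Nw where "Nw = Blos (\<Union> (verts ` P)) (nbase B)"
  have cl: "\<forall>N\<in>nodes st. \<forall>Q. par st N = Some Q \<longrightarrow> Q \<in> nodes st"
    using invarD(1)[OF inv] .
  have Bxn: "Bx \<in> nodes st" and Byn: "By \<in> nodes st" using be unfolding bridge_edge_def by auto
  have Pn: "P \<subseteq> nodes st" unfolding P_def using anc_nodes[OF cl Bxn] anc_nodes[OF cl Byn] by blast
  have Bn: "B \<in> nodes st" using B anc_nodes[OF cl Bxn] by blast
  have nd: "nodes ?st = (nodes st - P) \<union> {Nw}"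
    unfolding merge_state_def P_def Nw_def Let_def by simp
  have pr: "par ?st N = (if N = Nw then par st B
                         else (case par st N of None \<Rightarrow> None
                                | Some Q \<Rightarrow> if Q \<in> P then Some Nw else Some Q))" for N
    unfolding merge_state_def P_def Nw_def Let_def by simp
  have lc: "lcp ?st z = (if OddN z \<in> P then lcp st x + 1 + lcp st y - lcpo st z
                        else lcp st z)" for z
    unfolding merge_state_def P_def Nw_def Let_def by simp
  have lo: "lcpo ?st = lcpo st" "dlt ?st = dlt st" "stg ?st = stg st"
    unfolding merge_state_def Let_def by simp_all
  have od: "is_odd ?st w \<longleftrightarrow> is_odd st w \<and> OddN w \<notin> P" for w
    unfolding is_odd_def nd Nw_def by auto
  have ev: "is_even ?st u \<Longrightarrow> is_even st u \<or> OddN u \<in> P" for u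
  proof -
    assume "is_even ?st u"
    then obtain S b where Sb: "Blos S b \<in> nodes ?st" "u \<in> S" unfolding is_even_def by blast
    show ?thesis
    proof (cases "Blos S b = Nw")
      case True
      then obtain N where N: "N \<in> P" "u \<in> verts N" using Sb unfolding Nw_def by auto
      show ?thesis
      proof (cases N)
        case (OddN z) then show ?thesis using N by simp
      next
        case (Blos S' b') then show ?thesis using N Pn unfolding is_even_def by auto
      qed
    next
      case False
      then show ?thesis using Sb nd unfolding is_even_def by auto
    qed
  qed
  have ins: "inS ?st u \<longleftrightarrow> inS st u" for u
  proof
    assume "inS ?st u"
    then obtain N where N: "N \<in> nodes ?st" "u \<in> verts N" unfolding inS_def by blast
    show "inS st u"
    proof (cases "N = Nw")
      case True
      then show ?thesis using N Pn unfolding Nw_def inS_def by auto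
    next
      case False then show ?thesis using N nd unfolding inS_def by auto
    qed
  next
    assume "inS st u"
    then obtain N where N: "N \<in> nodes st" "u \<in> verts N" unfolding inS_def by blast
    show "inS ?st u"
    proof (cases "N \<in> P")
      case True
      then have "u \<in> verts Nw" using N unfolding Nw_def by auto
      then show ?thesis using nd unfolding inS_def by auto
    next
      case False then show ?thesis using N nd unfolding inS_def by auto
    qed
  qed
  have dn: "donev E ?st u \<longleftrightarrow> donev E st u" for u unfolding donev_def ins ..
  have xe: "is_even st x" and ye: "is_even st y"
  proof -
    obtain S b where "Bx = Blos S b" using be unfolding bridge_edge_def by (cases Bx) auto
    then show "is_even st x" using be unfolding bridge_edge_def is_even_def by auto
  next
    obtain S b where "By = Blos S b" using be unfolding bridge_edge_def by (cases By) auto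
    then show "is_even st y" using be unfolding bridge_edge_def is_even_def by auto
  qed
  have sumxy: "lcp st x + lcp st y = 2 * int (dlt st) - 2" using be unfolding bridge_edge_def by simp
  have stgB: "stg st = Bridge" using be unfolding bridge_edge_def by simp
  have newodd: "OddN u \<in> P \<Longrightarrow> is_odd st u" for u using Pn unfolding is_odd_def by blast
  have big: "OddN u \<in> P \<Longrightarrow> lcp ?st u \<ge> int (dlt st)" for u
  proof -
    assume a: "OddN u \<in> P"
    then have "lcpo st u \<le> int (dlt st) - 1" using newodd invarD(5)[OF inv] by blast
    then show ?thesis using lc[of u] a sumxy by simp
  qed
  have I1: "\<forall>N\<in>nodes ?st. \<forall>Q. par ?st N = Some Q \<longrightarrow> Q \<in> nodes ?st"
  proof (intro ballI allI impI)
    fix N Q assume N: "N \<in> nodes ?st" and Q: "par ?st N = Some Q"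
    show "Q \<in> nodes ?st"
    proof (cases "N = Nw")
      case True
      then have Q': "par st B = Some Q" using Q pr by simp
      then have "Q \<in> nodes st" using cl Bn by blast
      moreover have "Q \<in> sanc st B" using Q' Bn unfolding sanc_def parrel_def by auto
      ultimately show ?thesis using nd unfolding P_def by auto
    next
      case False
      then have Nn: "N \<in> nodes st" using N nd by auto
      obtain Q' where Q': "par st N = Some Q'" using Q pr False by (cases "par st N") auto
      show ?thesis
      proof (cases "Q' \<in> P")
        case True then show ?thesis using Q pr False Q' nd by simp
      next
        case F2: False
        then have "Q = Q'" using Q pr False Q' by simp
        then show ?thesis using F2 cl Nn Q' nd by auto
      qed
    qed
  qed
  have I2: "\<forall>u. \<not> (is_even ?st u \<and> is_odd ?st u)"
    using invarD(2)[OF inv] ev od by blast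
  have I3: "\<forall>e\<in>M. \<forall>a\<in>e. \<forall>b\<in>e. inS ?st a \<longrightarrow> inS ?st b"
    using invarD(3)[OF inv] unfolding ins by blast
  have I4: "\<forall>z. free V M z \<longrightarrow> inS ?st z" using invarD(4)[OF inv] unfolding ins by blast
  have I5: "\<forall>w. is_odd ?st w \<longrightarrow> lcpo ?st w \<le> int (dlt ?st) - 1 \<and> odd (lcpo ?st w)"
    using invarD(5,6)[OF inv] unfolding od lo by blast
  have I6: "\<forall>u. is_even ?st u \<longrightarrow> even (lcp ?st u)"
  proof (intro allI impI)
    fix u assume u: "is_even ?st u"
    show "even (lcp ?st u)"
    proof (cases "OddN u \<in> P")
      case True
      then have "odd (lcpo st u)" using newodd invarD(6)[OF inv] by blast
      moreover have "even (lcp st x)" "even (lcp st y)" using xe ye invarD(7)[OF inv] by auto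
      ultimately show ?thesis using lc[of u] True by simp
    next
      case False
      then show ?thesis using ev[OF u] lc[of u] invarD(7)[OF inv] by auto
    qed
  qed
  have I7: "\<forall>u. is_even ?st u \<longrightarrow> lcp ?st u + 2 < int (dlt ?st) \<longrightarrow> donev E ?st u"
  proof (intro allI impI)
    fix u assume u: "is_even ?st u" and l: "lcp ?st u + 2 < int (dlt ?st)"
    have "OddN u \<notin> P" using big l lo by force
    then show "donev E ?st u" using ev[OF u] lc[of u] l lo invarD(8)[OF inv] dn by auto
  qed
  have I8: "\<forall>u. is_even ?st u \<longrightarrow> stg ?st \<noteq> Growth \<longrightarrow> even (dlt ?st) \<longrightarrow>
        lcp ?st u + 2 = int (dlt ?st) \<longrightarrow> donev E ?st u"
  proof (intro allI impI)
    fix u assume u: "is_even ?st u" and l: "lcp ?st u + 2 = int (dlt ?st)"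
      and "stg ?st \<noteq> Growth" and evd: "even (dlt ?st)"
    have "OddN u \<notin> P" using big l lo by force
    then show "donev E ?st u" using ev[OF u] lc[of u] l lo invarD(9)[OF inv] dn stgB evd by auto
  qed
  have I9: "\<forall>u w. {u, w} \<in> E \<longrightarrow> is_even ?st u \<longrightarrow> is_odd ?st w \<longrightarrow> lcpo ?st w \<le> lcp ?st u + 1"
  proof (intro allI impI)
    fix u w assume uw: "{u, w} \<in> E" "is_even ?st u" "is_odd ?st w"
    then have wo: "is_odd st w" using od by blast
    show "lcpo ?st w \<le> lcp ?st u + 1"
    proof (cases "OddN u \<in> P")
      case True
      have "lcpo st w \<le> int (dlt st) - 1" using wo invarD(5)[OF inv] by blast
      moreover have "lcpo ?st w = lcpo st w" using lo(1) by simp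
      ultimately show ?thesis using big[OF True] lo(2) by linarith
    next
      case False
      have "lcp ?st u = lcp st u" using lc[of u] False by simp
      moreover have "lcpo ?st w = lcpo st w" using lo(1) by simp
      moreover have "is_even st u" using ev[OF uw(2)] False by blast
      ultimately show ?thesis using uw(1) wo invarD(10)[OF inv] by metis
    qed
  qed
  show ?thesis unfolding invar_def by (intro conjI I1 I2 I3 I4 I5 I6 I7 I8 I9)
qed


lemma invar_same:
  assumes inv: "invar V E M st" and n: "nodes st' = nodes st" and p: "par st' = par st"
    and l: "lcp st' = lcp st" and lo: "lcpo st' = lcpo st" and d: "dlt st' = dlt st"
    and g: "stg st' \<noteq> Growth \<Longrightarrow> even (dlt st) \<Longrightarrow>
            (\<forall>u. is_even st u \<longrightarrow> lcp st u + 2 = int (dlt st) \<longrightarrow> donev E st u)"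
  shows "invar V E M st'"
proof -
  have e: "is_even st' = is_even st" "is_odd st' = is_odd st" "inS st' = inS st"
    "donev E st' = donev E st"
    unfolding is_even_def[abs_def] is_odd_def[abs_def] inS_def[abs_def] donev_def[abs_def] n by simp_all
  show ?thesis unfolding invar_def e n p l lo d
  proof (intro conjI)
    show "\<forall>u. is_even st u \<longrightarrow> stg st' \<noteq> Growth \<longrightarrow> even (dlt st) \<longrightarrow>
        lcp st u + 2 = int (dlt st) \<longrightarrow> donev E st u" using g by blast
  qed (use invarD(1-8,10)[OF inv] in blast)+
qed

lemma invar_next:
  assumes inv: "invar V E M st" and sb: "stg st = Bridge"
  shows "invar V E M (st\<lparr> dlt := dlt st + 1, stg := Growth \<rparr>)" (is "invar V E M ?st")
proof -
  have e: "is_even ?st = is_even st" "is_odd ?st = is_odd st" "inS ?st = inS st"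
    "donev E ?st = donev E st"
    unfolding is_even_def[abs_def] is_odd_def[abs_def] inS_def[abs_def] donev_def[abs_def] by simp_all
  have I7: "\<forall>u. is_even st u \<longrightarrow> lcp st u + 2 < int (dlt st + 1) \<longrightarrow> donev E st u"
  proof (intro allI impI)
    fix u assume u: "is_even st u" and l: "lcp st u + 2 < int (dlt st + 1)"
    show "donev E st u"
    proof (cases "lcp st u + 2 < int (dlt st)")
      case True then show ?thesis using invarD(8)[OF inv u] by blast
    next
      case False
      then have eq: "lcp st u + 2 = int (dlt st)" using l by simp
      have "even (lcp st u)" using invarD(7)[OF inv u] .
      then have "even (int (dlt st))" using eq by (metis even_add even_numeral)
      then have "even (dlt st)" by simp
      then show ?thesis using invarD(9)[OF inv u] sb eq by simp
    qed
  qed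
  have I5: "\<forall>w. is_odd st w \<longrightarrow> lcpo st w \<le> int (dlt st + 1) - 1 \<and> odd (lcpo st w)"
    using invarD(5,6)[OF inv] by fastforce
  have d: "dlt ?st = dlt st + 1" "stg ?st = Growth" "nodes ?st = nodes st" "par ?st = par st"
    "lcp ?st = lcp st" "lcpo ?st = lcpo st" by simp_all
  show ?thesis unfolding invar_def e d
  proof (intro conjI)
    show "\<forall>u. is_even st u \<longrightarrow> Growth \<noteq> Growth \<longrightarrow> even (dlt st + 1) \<longrightarrow>
        lcp st u + 2 = int (dlt st + 1) \<longrightarrow> donev E st u" by simp
  qed (use invarD(1-4,7,10)[OF inv] I7 I5 in blast)+
qed

lemma invar_step:
  assumes "step E M st st'" "invar V E M st" "graph V E" "matching E M"
  shows "invar V E M st'"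
  using assms
proof (induction rule: step.induct)
  case (grow st S b v x y)
  show ?case by (rule invar_grow[OF grow.prems(1-3) grow.hyps])
next
  case (to_bridge st)
  show ?case
  proof (rule invar_same[OF to_bridge.prems(1)])
    assume ev: "even (dlt st)"
    then have "\<not> growth_possible E st" using to_bridge.hyps by blast
    then show "\<forall>u. is_even st u \<longrightarrow> lcp st u + 2 = int (dlt st) \<longrightarrow> donev E st u"
    proof (intro allI impI)
      fix u assume u: "is_even st u" and l: "lcp st u + 2 = int (dlt st)"
      then have "lcp st u = int (dlt st) - 2" by simp
      then show "donev E st u" using u \<open>\<not> growth_possible E st\<close>
        unfolding growth_possible_def donev_def by blast
    qed
  qed simp_all
next
  case (stop st x y Bx By)
  have "stg st = Bridge" using stop.hyps unfolding bridge_edge_def by simp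
  then show ?case using invarD(9)[OF stop.prems(1)] by (intro invar_same[OF stop.prems(1)]) simp_all
next
  case (merge st x y Bx By B)
  show ?case by (rule invar_merge[OF merge.prems(1) merge.hyps(1,2)])
next
  case (next_phase st)
  show ?case by (rule invar_next[OF next_phase.prems(1) next_phase.hyps(1)])
qed

theorem lemma2:
  fixes V :: "'a set" and E M :: "'a set set" and st :: "'a sstate" and u v :: 'a
  assumes "graph V E" and "matching E M"
    and "(step E M)\<^sup>*\<^sup>* (init V M) st"
    and "{u, v} \<in> E" and "is_even st u" and "is_odd st v"
  shows "lcpo st v \<le> lcp st u + 1"
proof -
  have "invar V E M st" using assms(3)
  proof (induction rule: rtranclp_induct)
    case base then show ?case by (rule invar_init)
  next
    case (step a b) show ?case by (rule invar_step[OF step.hyps(2) step.IH assms(1,2)])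
  qed
  then show ?thesis by (rule invarD(10)[OF _ assms(4,5,6)])
qed

end
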